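(* Let $n_1,n_2\ge2$, $N=n_1n_2$, and let $\tau_1\neq\tau_2$ be real numbers such that $(\sqrt{\tau_1},\sqrt{\tau_2})$ is $(n_1,n_2)$-independent. Let $K=K(n_1,n_2,\tau_1,\tau_2)$, $Q=\begin{pmatrix}K&\mathcal I_N\\0&K\end{pmatrix}$ and $e_1=(1,0,\dots,0)\in\mathbb{R}^{2N}$ (row vector). Then: (i) If $N$ is even, then for every positive integer $s$ the vectors $e_1Q^s,e_1Q^{s+1},\dots,e_1Q^{s+2N-1}$ are linearly independent. (ii) If $N$ is odd, let $s\ge 2N$, $\Lambda=\{e_1Q^2,e_1Q^3,\dots,e_1Q^{2N-1}\}$, $\Lambda_s=\Lambda\cup\{e_1Q^s\}$, and let $\bar M(s)$ be the $(2N-1)\times 2N$ matrix whose rows are $e_1Q^2,\dots,e_1Q^{2N-1},e_1Q^s$ in this order, with columns $\bar{\mathfrak C}_1(s),\dots,\bar{\mathfrak C}_{2N}(s)$. Then (a) $\Lambda$ is linearly independent while $\Lambda_s$ is linearly dependent; (b) $\bar{\mathfrak C}_1(s)$ lies in the span of the odd columns $\bar{\mathfrak C}_3(s),\bar{\mathfrak C}_5(s),\dots,\bar{\mathfrak C}_{N}(s)$; (c) $\bar{\mathfrak C}_{N+1}(s)$ lies in the span of the columns $\bar{\mathfrak C}_{N+3}(s),\bar{\mathfrak C}_{N+5}(s),\dots,\bar{\mathfrak C}_{2N}(s)$.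
   Context: Modified Kac matrix: for $m\ge1$, $y\in\mathbb{R}$, $\mathcal K(m,y)=(k_{ij})_{1\le i,j\le m}$ with $k_{i,i-1}=(m-i+1)y$, $k_{i,i+1}=i$, other entries $0$. Modified Kac matrix of second type: $K(n_1,n_2,x,y)=\mathcal I_{n_1}\otimes\mathcal K(n_2,y)+\mathcal K(n_1,x)\otimes\mathcal I_{n_2}$, i.e. the matrix of $n_2\times n_2$ blocks with diagonal blocks $\mathcal K(n_2,y)$, subdiagonal blocks $K_{i,i-1}=(n_1-i+1)x\,\mathcal I_{n_2}$, superdiagonal blocks $K_{i,i+1}=i\,\mathcal I_{n_2}$. With $\mathcal N_i=\{n_i-1-2r: r=0,\dots,n_i-1\}$, a pair $(z_1,z_2)\in\mathbb{C}^2$ is $(n_1,n_2)$-independent if for all $a_i,b_i\in\mathcal N_i$, $(a_1-b_1)z_1+(a_2-b_2)z_2=0$ implies $a_1=b_1$ and $a_2=b_2$. *)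

theory Defs
  imports "Jordan_Normal_Form.VS_Connect" Complex_Main
begin

(* All matrices are Jordan_Normal_Form matrices, 0-indexed:
   paper entry (i,j) (1-indexed) is entry (i-1,j-1) here. *)

text \<open>Modified Kac matrix K(m,y): k_{i,i-1} = (m-i+1) y, k_{i,i+1} = i (1-indexed).\<close>
definition kac_mat :: "nat \<Rightarrow> real \<Rightarrow> real mat" where
  "kac_mat m y = mat m m (\<lambda>(i,j).
      if j + 1 = i then of_nat (m - i) * y
      else if j = i + 1 then of_nat (i + 1)
      else 0)"

definition kron :: "real mat \<Rightarrow> real mat \<Rightarrow> real mat" where
  "kron A B = mat (dim_row A * dim_row B) (dim_col A * dim_col B)
      (\<lambda>(i,j). A $$ (i div dim_row B, j div dim_col B) * B $$ (i mod dim_row B, j mod dim_col B))"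

definition kac2_mat :: "nat \<Rightarrow> nat \<Rightarrow> real \<Rightarrow> real \<Rightarrow> real mat" where
  "kac2_mat n1 n2 x y = kron (1\<^sub>m n1) (kac_mat n2 y) + kron (kac_mat n1 x) (1\<^sub>m n2)"

definition Qmat :: "nat \<Rightarrow> nat \<Rightarrow> real \<Rightarrow> real \<Rightarrow> real mat" where
  "Qmat n1 n2 x y = four_block_mat (kac2_mat n1 n2 x y) (1\<^sub>m (n1*n2))
                                   (0\<^sub>m (n1*n2) (n1*n2)) (kac2_mat n1 n2 x y)"

definition e1Q :: "nat \<Rightarrow> nat \<Rightarrow> real \<Rightarrow> real \<Rightarrow> nat \<Rightarrow> real vec" where
  "e1Q n1 n2 x y s = row (Qmat n1 n2 x y ^\<^sub>m s) 0"

definition Nset :: "nat \<Rightarrow> int set" where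
  "Nset n = {int n - 1 - 2 * int r | r. r < n}"

definition indep_pair :: "nat \<Rightarrow> nat \<Rightarrow> complex \<Rightarrow> complex \<Rightarrow> bool" where
  "indep_pair n1 n2 z1 z2 \<longleftrightarrow>
     (\<forall>a1\<in>Nset n1. \<forall>b1\<in>Nset n1. \<forall>a2\<in>Nset n2. \<forall>b2\<in>Nset n2.
        of_int (a1 - b1) * z1 + of_int (a2 - b2) * z2 = 0 \<longrightarrow> a1 = b1 \<and> a2 = b2)"

abbreviation lin_dep_vecs :: "nat \<Rightarrow> real vec set \<Rightarrow> bool" where
  "lin_dep_vecs n S \<equiv> LinearCombinations.module.lin_dep class_ring (module_vec TYPE(real) n) S"

abbreviation span_vecs :: "nat \<Rightarrow> real vec set \<Rightarrow> real vec set" where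
  "span_vecs n S \<equiv> LinearCombinations.module.span class_ring (module_vec TYPE(real) n) S"

definition lin_indep_family :: "nat \<Rightarrow> real vec list \<Rightarrow> bool" where
  "lin_indep_family n vs \<longleftrightarrow> distinct vs \<and> \<not> lin_dep_vecs n (set vs)"

end

theory Submission
  imports Defs "HOL-Computational_Algebra.Polynomial"
begin


lemma smult0_vec[simp]: "(0::'a::comm_ring_1) \<cdot>\<^sub>v v = 0\<^sub>v (dim_vec v)"
  by (rule eq_vecI) auto

definition kacg :: "nat \<Rightarrow> 'a::field \<Rightarrow> 'a mat" where
 "kacg m y = mat m m (\<lambda>(i,j). if j + 1 = i then of_nat (m - i) * y else if j = i + 1 then of_nat (i+1) else 0)"

lemma kac_mat_eq: "kac_mat m y = kacg m y"
  unfolding kac_mat_def kacg_def by simp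

lemma map_kac: "map_mat complex_of_real (kac_mat m y) = kacg m (complex_of_real y)"
  unfolding kac_mat_def kacg_def by (rule eq_matI) auto

lemma kacg_carrier[simp]: "kacg m y \<in> carrier_mat m m" unfolding kacg_def by simp

lemma kacg_mult_vec:
  fixes c :: "nat \<Rightarrow> 'a::field"
  assumes i: "i < m"
  shows "(kacg m y *\<^sub>v vec m c) $ i =
     (if 0 < i then of_nat (m - i) * y * c (i - 1) else 0) + (if i + 1 < m then of_nat (i+1) * c (i+1) else 0)"
proof -
  have "(kacg m y *\<^sub>v vec m c) $ i = (\<Sum>j\<in>{0..<m}. kacg m y $$ (i,j) * c j)"
    using i unfolding mult_mat_vec_def scalar_prod_def kacg_def by (simp add: row_def)
  also have "\<dots> = (\<Sum>j\<in>{0..<m}. (if j = i - 1 \<and> 0 < i then of_nat (m - i) * y * c j else 0)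
        + (if j = i + 1 then of_nat (i+1) * c j else 0))"
    by (rule sum.cong) (use i in \<open>auto simp: kacg_def\<close>)
  also have "\<dots> = (if 0 < i then of_nat (m - i) * y * c (i - 1) else 0) + (if i + 1 < m then of_nat (i+1) * c (i+1) else 0)"
    using i by (auto simp add: sum.distrib sum.delta' conj_commute)
  finally show ?thesis .
qed

lemma kac_eigen_poly:
  fixes f :: "'a::field poly"
  assumes deg: "degree f < m"
    and ode: "[:1, 0, -y:] * pderiv f = [:lam, - of_nat (m - 1) * y:] * f"
  shows "kacg m y *\<^sub>v vec m (coeff f) = lam \<cdot>\<^sub>v vec m (coeff f)"
proof (rule eq_vecI)
  fix i assume "i < dim_vec (lam \<cdot>\<^sub>v vec m (coeff f))"
  hence i: "i < m" by simp
  have cm: "coeff f m = 0" using deg by (simp add: coeff_eq_0)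
  have E: "coeff ([:1, 0, -y:] * pderiv f) i = coeff ([:lam, - of_nat (m - 1) * y:] * f) i"
    using ode by simp
  show "(kacg m y *\<^sub>v vec m (coeff f)) $ i = (lam \<cdot>\<^sub>v vec m (coeff f)) $ i"
  proof (cases i)
    case 0
    then show ?thesis using E i cm by (cases m) (auto simp: kacg_mult_vec coeff_pderiv)
  next
    case (Suc k)
    have "(kacg m y *\<^sub>v vec m (coeff f)) $ i = of_nat (m - i) * y * coeff f k + of_nat (i+1) * coeff f (i+1)"
      proof -
      have "Suc (Suc k) < m \<or> Suc (Suc k) = m" using i Suc by auto
      then show ?thesis using i cm Suc by (auto simp: kacg_mult_vec)
    qed
    also have "\<dots> = lam * coeff f i"
    proof (cases k)
      case 0
      then show ?thesis using E Suc i by (auto simp: coeff_pderiv algebra_simps of_nat_diff)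
    next
      case (Suc l)
      then show ?thesis using E \<open>i = Suc k\<close> i by (auto simp: coeff_pderiv algebra_simps of_nat_diff)
    qed
    finally show ?thesis using i by simp
  qed
qed (auto simp: kacg_def)

lemma pderiv_pow_mult: "p * pderiv (p ^ n) = Polynomial.smult (of_nat n) (p ^ n) * pderiv (p::'a::field poly)"
proof (induction n)
  case (Suc n)
  have "p * pderiv (p ^ Suc n) = p * (p * pderiv (p ^ n) + p ^ n * pderiv p)"
    by (simp add: pderiv_mult)
  also have "\<dots> = p * (Polynomial.smult (of_nat n) (p ^ n) * pderiv p) + p ^ Suc n * pderiv p"
    using Suc by (simp add: algebra_simps)
  also have "\<dots> = Polynomial.smult (of_nat (Suc n)) (p ^ Suc n) * pderiv p"
    by (simp add: algebra_simps smult_add_left)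
  finally show ?case .
qed simp

lemma kac_ode_general:
  fixes z :: "'a::field"
  assumes "r < m"
  defines "f \<equiv> [:1, -z:] ^ r * [:1, z:] ^ (m - 1 - r)"
  shows "[:1, 0, -(z*z):] * pderiv f = [:z * (of_nat (m - 1 - r) - of_nat r), - of_nat (m - 1) * (z*z):] * f"
proof -
  define P where "P = [:1, -z:]"
  define Q where "Q = [:1, z:]"
  define s where "s = m - 1 - r"
  have PQ: "[:1, 0, -(z*z):] = P * Q" unfolding P_def Q_def by simp
  have A: "P * pderiv (P ^ r) = Polynomial.smult (of_nat r) (P ^ r) * pderiv P" by (rule pderiv_pow_mult)
  have B: "Q * pderiv (Q ^ s) = Polynomial.smult (of_nat s) (Q ^ s) * pderiv Q" by (rule pderiv_pow_mult)
  have "[:1, 0, -(z*z):] * pderiv f = P * Q * (P ^ r * pderiv (Q ^ s) + Q ^ s * pderiv (P ^ r))"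
    unfolding PQ f_def P_def Q_def s_def by (simp add: pderiv_mult)
  also have "\<dots> = P ^ r * P * (Q * pderiv (Q ^ s)) + Q ^ s * Q * (P * pderiv (P ^ r))"
    by (simp add: algebra_simps)
  also have "\<dots> = P ^ r * Q ^ s * (Polynomial.smult (of_nat s) (P * pderiv Q) + Polynomial.smult (of_nat r) (Q * pderiv P))"
    unfolding A B by (simp add: algebra_simps)
  also have "Polynomial.smult (of_nat s) (P * pderiv Q) + Polynomial.smult (of_nat r) (Q * pderiv P)
      = [:z * (of_nat s - of_nat r), - of_nat (m - 1) * (z*z):]"
    unfolding P_def Q_def s_def using assms(1) by (simp add: pderiv_pCons algebra_simps of_nat_diff)
  finally show ?thesis unfolding f_def P_def Q_def s_def by (simp add: algebra_simps)
qed

definition kvec :: "nat \<Rightarrow> 'a::field \<Rightarrow> nat \<Rightarrow> 'a vec" where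
  "kvec m z r = vec m (coeff ([:1, -z:] ^ r * [:1, z:] ^ (m - 1 - r)))"

lemma kvec_eigen:
  fixes z :: "'a::field"
  assumes "r < m"
  shows "kacg m (z*z) *\<^sub>v kvec m z r = (z * (of_nat (m - 1 - r) - of_nat r)) \<cdot>\<^sub>v kvec m z r"
    and "kvec m z r $ 0 = 1" and "kvec m z r \<in> carrier_vec m"
proof -
  let ?f = "[:1, -z:] ^ r * [:1, z:] ^ (m - 1 - r)"
  have "degree ?f \<le> degree ([:1, -z:] ^ r) + degree ([:1, z:] ^ (m - 1 - r))"
    by (rule degree_mult_le)
  also have "\<dots> \<le> degree [:1, -z:] * r + degree [:1, z:] * (m - 1 - r)"
    by (intro add_mono degree_power_le)
  also have "\<dots> \<le> r + (m - 1 - r)" by (intro add_mono) (auto simp: degree_pCons_eq_if)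
  finally have "degree ?f < m" using assms by linarith
  from kac_eigen_poly[OF this kac_ode_general[OF assms]]
  show "kacg m (z*z) *\<^sub>v kvec m z r = (z * (of_nat (m - 1 - r) - of_nat r)) \<cdot>\<^sub>v kvec m z r"
    unfolding kvec_def by simp
  have "coeff ?f 0 = 1" by (simp add: coeff_mult_0 coeff_0_power)
  then show "kvec m z r $ 0 = 1" using assms unfolding kvec_def by simp
  show "kvec m z r \<in> carrier_vec m" unfolding kvec_def by simp
qed

definition nvec :: "nat \<Rightarrow> 'a::field \<Rightarrow> 'a vec" where
  "nvec m y = vec m (coeff ([:1, 0, -y:] ^ (m div 2)))"

lemma coeff_even_pow: "odd k \<Longrightarrow> coeff ([:1, 0, c:] ^ h) k = 0"
proof (induction h arbitrary: k)
  case 0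
  then show ?case by (cases k) auto
next
  case (Suc h)
  have "[:1, 0, c:] ^ Suc h = [:1, 0, c:] ^ h + pCons 0 (pCons 0 (Polynomial.smult c ([:1, 0, c:] ^ h)))"
    by (simp add: algebra_simps)
  moreover have "coeff (pCons 0 (pCons 0 (Polynomial.smult c ([:1, 0, c:] ^ h)))) k = 0"
  proof (cases k)
    case (Suc k1)
    show ?thesis
    proof (cases k1)
      case (Suc k2)
      then show ?thesis using \<open>k = Suc k1\<close> Suc.IH[of k2] Suc.prems by auto
    qed (use \<open>k = Suc k1\<close> in simp)
  qed simp
  ultimately show ?case using Suc.IH[OF Suc.prems] by simp
qed

lemma nvec_null:
  fixes y :: "'a::field"
  assumes "odd m"
  shows "kacg m y *\<^sub>v nvec m y = 0\<^sub>v m"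
    and "nvec m y $ 0 = 1" and "nvec m y \<in> carrier_vec m"
    and "\<And>k. k < m \<Longrightarrow> odd k \<Longrightarrow> nvec m y $ k = 0"
proof -
  let ?p = "[:1, 0, -y:]"
  let ?h = "m div 2"
  have "degree (?p ^ ?h) \<le> degree ?p * ?h" by (rule degree_power_le)
  also have "\<dots> \<le> 2 * ?h" by (intro mult_right_mono) (auto simp: degree_pCons_eq_if)
  finally have deg: "degree (?p ^ ?h) < m" using assms by presburger
  have "?p * pderiv (?p ^ ?h) = Polynomial.smult (of_nat ?h) (?p ^ ?h) * pderiv ?p"
    by (rule pderiv_pow_mult)
  also have "\<dots> = [:0, - of_nat (m - 1) * y:] * ?p ^ ?h"
  proof -
    have "of_nat (m - 1) = (2::'a) * of_nat ?h" using assms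
      by (metis dvd_mult_div_cancel odd_two_times_div_two_nat of_nat_mult of_nat_numeral)
    then show ?thesis by (simp add: pderiv_pCons algebra_simps)
  qed
  finally have ode: "?p * pderiv (?p ^ ?h) = [:0, - of_nat (m - 1) * y:] * ?p ^ ?h" .
  from kac_eigen_poly[OF deg ode]
  show "kacg m y *\<^sub>v nvec m y = 0\<^sub>v m" unfolding nvec_def by (simp add: smult0_vec)
  show "nvec m y $ 0 = 1" using assms unfolding nvec_def by (cases m) (auto simp: coeff_0_power)
  show "nvec m y \<in> carrier_vec m" unfolding nvec_def by simp
  show "\<And>k. k < m \<Longrightarrow> odd k \<Longrightarrow> nvec m y $ k = 0"
    unfolding nvec_def using coeff_even_pow[of _ "-y"] by simp
qed



lemma sum_divmod:
  fixes g :: "nat \<Rightarrow> 'a::comm_monoid_add"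
  assumes "0 < n2"
  shows "(\<Sum>j<n1*n2. g j) = (\<Sum>j1<n1. \<Sum>j2<n2. g (j1*n2+j2))"
proof -
  have "(\<Sum>j1<n1. \<Sum>j2<n2. g (j1*n2+j2)) = (\<Sum>(a,b)\<in>{..<n1}\<times>{..<n2}. g (a*n2+b))"
    by (simp add: sum.cartesian_product)
  also have "\<dots> = (\<Sum>j<n1*n2. g j)"
  proof (rule sum.reindex_bij_witness[where i="\<lambda>j. (j div n2, j mod n2)" and j="\<lambda>(a,b). a*n2+b"])
    fix ab assume "ab \<in> {..<n1}\<times>{..<n2}"
    then obtain a b where ab: "ab = (a,b)" "a < n1" "b < n2" by auto
    have "a*n2+b < n1*n2"
    proof -
      have "a*n2+b < a*n2 + n2" using ab by simp
      also have "\<dots> = (a+1)*n2" by simp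
      also have "\<dots> \<le> n1*n2" using ab by (intro mult_right_mono) auto
      finally show ?thesis .
    qed
    then show "(case ab of (a, b) \<Rightarrow> a * n2 + b) \<in> {..<n1 * n2}" using ab by simp
    show "((case ab of (a, b) \<Rightarrow> a * n2 + b) div n2, (case ab of (a, b) \<Rightarrow> a * n2 + b) mod n2) = ab"
      using ab assms by simp
    show "g (case ab of (a, b) \<Rightarrow> a * n2 + b) = (case ab of (a, b) \<Rightarrow> g (a * n2 + b))" using ab by simp
  next
    fix j assume "j \<in> {..<n1*n2}"
    then show "(j div n2, j mod n2) \<in> {..<n1} \<times> {..<n2}" using assms
      by (auto simp: less_mult_imp_div_less)
    show "(case (j div n2, j mod n2) of (a, b) \<Rightarrow> a * n2 + b) = j" by simp
  qed
  finally show ?thesis ..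
qed

definition gK :: "nat \<Rightarrow> nat \<Rightarrow> 'a::field mat \<Rightarrow> 'a mat \<Rightarrow> 'a mat" where
  "gK n1 n2 A B = mat (n1*n2) (n1*n2) (\<lambda>(i,j).
     (if i div n2 = j div n2 then B $$ (i mod n2, j mod n2) else 0)
   + (if i mod n2 = j mod n2 then A $$ (i div n2, j div n2) else 0))"

definition vkron :: "nat \<Rightarrow> nat \<Rightarrow> 'a::field vec \<Rightarrow> 'a vec \<Rightarrow> 'a vec" where
  "vkron n1 n2 v w = vec (n1*n2) (\<lambda>i. v $ (i div n2) * w $ (i mod n2))"

lemma gK_carrier[simp]: "gK n1 n2 A B \<in> carrier_mat (n1*n2) (n1*n2)" unfolding gK_def by simp

lemma kac2_gK: "kac2_mat n1 n2 x y = gK n1 n2 (kac_mat n1 x) (kac_mat n2 y)"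
proof (rule eq_matI)
  fix i j assume ij: "i < dim_row (gK n1 n2 (kac_mat n1 x) (kac_mat n2 y))" "j < dim_col (gK n1 n2 (kac_mat n1 x) (kac_mat n2 y))"
  hence "i < n1*n2" "j < n1*n2" by (auto simp: gK_def)
  moreover have n2: "0 < n2" using calculation by (cases n2) auto
  ultimately have d: "i div n2 < n1" "j div n2 < n1" and m: "i mod n2 < n2" "j mod n2 < n2"
    by (auto simp: less_mult_imp_div_less)
  show "kac2_mat n1 n2 x y $$ (i, j) = gK n1 n2 (kac_mat n1 x) (kac_mat n2 y) $$ (i, j)"
    using \<open>i < n1*n2\<close> \<open>j < n1*n2\<close> d m
    unfolding kac2_mat_def kron_def gK_def by (simp add: kac_mat_def)
qed (auto simp: kac2_mat_def kron_def gK_def kac_mat_def)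

lemma map_kac2: "map_mat complex_of_real (kac2_mat n1 n2 x y) = gK n1 n2 (kacg n1 (complex_of_real x)) (kacg n2 (complex_of_real y))"
  unfolding kac2_gK map_kac[symmetric]
proof (rule eq_matI)
  fix i j assume "i < dim_row (gK n1 n2 (map_mat complex_of_real (kac_mat n1 x)) (map_mat complex_of_real (kac_mat n2 y)))"
    "j < dim_col (gK n1 n2 (map_mat complex_of_real (kac_mat n1 x)) (map_mat complex_of_real (kac_mat n2 y)))"
  hence ij: "i < n1*n2" "j < n1*n2" by (auto simp: gK_def)
  moreover have n2: "0 < n2" using calculation by (cases n2) auto
  ultimately have d: "i div n2 < n1" "j div n2 < n1" and m: "i mod n2 < n2" "j mod n2 < n2"
    by (auto simp: less_mult_imp_div_less)
  show "map_mat complex_of_real (gK n1 n2 (kac_mat n1 x) (kac_mat n2 y)) $$ (i, j) =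
         gK n1 n2 (map_mat complex_of_real (kac_mat n1 x)) (map_mat complex_of_real (kac_mat n2 y)) $$ (i, j)"
    using ij d m by (simp add: gK_def kac_mat_def)
qed (auto simp: gK_def)

lemma mat_vec_index_sum:
  assumes "A \<in> carrier_mat n n" "v \<in> carrier_vec n" "i < n"
  shows "(A *\<^sub>v v) $ i = (\<Sum>j<n. A $$ (i,j) * v $ j)"
  using assms by (auto simp: scalar_prod_def lessThan_atLeast0 intro!: sum.cong)

lemma gK_eigen:
  fixes A B :: "'a::field mat"
  assumes A: "A \<in> carrier_mat n1 n1" and B: "B \<in> carrier_mat n2 n2"
    and v: "v \<in> carrier_vec n1" and w: "w \<in> carrier_vec n2"
    and Av: "A *\<^sub>v v = a \<cdot>\<^sub>v v" and Bw: "B *\<^sub>v w = b \<cdot>\<^sub>v w"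
  shows "gK n1 n2 A B *\<^sub>v vkron n1 n2 v w = (a + b) \<cdot>\<^sub>v vkron n1 n2 v w"
proof (rule eq_vecI)
  fix i assume "i < dim_vec ((a + b) \<cdot>\<^sub>v vkron n1 n2 v w)"
  hence i: "i < n1*n2" by (simp add: vkron_def)
  have n2: "0 < n2" using i by (cases n2) auto
  define i1 where "i1 = i div n2"
  define i2 where "i2 = i mod n2"
  have i1: "i1 < n1" and i2: "i2 < n2" using i n2 by (auto simp: i1_def i2_def less_mult_imp_div_less)
  have Avi: "(\<Sum>j1<n1. A $$ (i1,j1) * v $ j1) = a * v $ i1"
    using arg_cong[OF Av, of "\<lambda>x. x $ i1"] mat_vec_index_sum[OF A v i1] i1 v by simp
  have Bwi: "(\<Sum>j2<n2. B $$ (i2,j2) * w $ j2) = b * w $ i2"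
    using arg_cong[OF Bw, of "\<lambda>x. x $ i2"] mat_vec_index_sum[OF B w i2] i2 w by simp
  have "(gK n1 n2 A B *\<^sub>v vkron n1 n2 v w) $ i = (\<Sum>j<n1*n2. gK n1 n2 A B $$ (i,j) * vkron n1 n2 v w $ j)"
    by (rule mat_vec_index_sum[OF gK_carrier _ i]) (simp add: vkron_def)
  also have "\<dots> = (\<Sum>j1<n1. \<Sum>j2<n2. gK n1 n2 A B $$ (i,j1*n2+j2) * vkron n1 n2 v w $ (j1*n2+j2))"
    by (rule sum_divmod[OF n2])
  also have "\<dots> = (\<Sum>j1<n1. \<Sum>j2<n2. ((if i1 = j1 then B $$ (i2, j2) * (v $ j1 * w $ j2) else 0)
          + (if i2 = j2 then A $$ (i1, j1) * (v $ j1 * w $ j2) else 0)))"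
  proof (intro sum.cong refl)
    fix j1 j2 assume "j1 \<in> {..<n1}" "j2 \<in> {..<n2}"
    hence j: "j1 < n1" "j2 < n2" by auto
    have jl: "j1*n2+j2 < n1*n2"
    proof -
      have "j1*n2+j2 < j1*n2 + n2" using j by simp
      also have "\<dots> = (j1+1)*n2" by simp
      also have "\<dots> \<le> n1*n2" using j by (intro mult_right_mono) auto
      finally show ?thesis .
    qed
    show "gK n1 n2 A B $$ (i,j1*n2+j2) * vkron n1 n2 v w $ (j1*n2+j2) = ((if i1 = j1 then B $$ (i2, j2) * (v $ j1 * w $ j2) else 0)
          + (if i2 = j2 then A $$ (i1, j1) * (v $ j1 * w $ j2) else 0))"
      using i jl j n2 unfolding gK_def vkron_def i1_def[symmetric] i2_def[symmetric]
      by (simp add: i1_def i2_def algebra_simps)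
  qed
  also have "\<dots> = (\<Sum>j2<n2. B $$ (i2, j2) * (v $ i1 * w $ j2)) + (\<Sum>j1<n1. A $$ (i1, j1) * (v $ j1 * w $ i2))"
  proof -
    have 1: "(\<Sum>j1<n1. \<Sum>j2<n2. (if i1 = j1 then B $$ (i2, j2) * (v $ j1 * w $ j2) else 0))
       = (\<Sum>j2<n2. B $$ (i2, j2) * (v $ i1 * w $ j2))"
      by (subst sum.swap) (simp add: sum.delta i1)
    have 2: "(\<Sum>j1<n1. \<Sum>j2<n2. (if i2 = j2 then A $$ (i1, j1) * (v $ j1 * w $ j2) else 0))
       = (\<Sum>j1<n1. A $$ (i1, j1) * (v $ j1 * w $ i2))"
      by (simp add: sum.delta i2)
    show ?thesis unfolding sum.distrib 1 2 ..
  qed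
  also have "\<dots> = v $ i1 * (\<Sum>j2<n2. B $$ (i2,j2) * w $ j2) + (\<Sum>j1<n1. A $$ (i1,j1) * v $ j1) * w $ i2"
    by (simp add: sum_distrib_left sum_distrib_right algebra_simps)
  also have "\<dots> = (a + b) * (v $ i1 * w $ i2)" unfolding Avi Bwi by (simp add: algebra_simps)
  finally show "(gK n1 n2 A B *\<^sub>v vkron n1 n2 v w) $ i = ((a + b) \<cdot>\<^sub>v vkron n1 n2 v w) $ i"
    using i by (simp add: vkron_def i1_def i2_def)
qed (simp add: gK_def vkron_def)

lemma pow_Q:
  fixes K :: "'a::field mat"
  assumes K: "K \<in> carrier_mat n n"
  shows "four_block_mat K (1\<^sub>m n) (0\<^sub>m n n) K ^\<^sub>m k
       = four_block_mat (K ^\<^sub>m k) (of_nat k \<cdot>\<^sub>m K ^\<^sub>m (k - 1)) (0\<^sub>m n n) (K ^\<^sub>m k)"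
proof (induction k)
  case 0
  have "four_block_mat (1\<^sub>m n) (0 \<cdot>\<^sub>m K ^\<^sub>m 0) (0\<^sub>m n n) (1\<^sub>m n) = 1\<^sub>m (n + n)"
  proof -
    have "(0::'a) \<cdot>\<^sub>m K ^\<^sub>m 0 = 0\<^sub>m n n" using K by (intro eq_matI) auto
    then show ?thesis by simp
  qed
  then show ?case using K by simp
next
  case (Suc k)
  have Kk: "K ^\<^sub>m k \<in> carrier_mat n n" and Kk1: "K ^\<^sub>m (k-1) \<in> carrier_mat n n" using K by auto
  have "four_block_mat K (1\<^sub>m n) (0\<^sub>m n n) K ^\<^sub>m Suc k =
     four_block_mat (K ^\<^sub>m k) (of_nat k \<cdot>\<^sub>m K ^\<^sub>m (k - 1)) (0\<^sub>m n n) (K ^\<^sub>m k) * four_block_mat K (1\<^sub>m n) (0\<^sub>m n n) K"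
    using Suc by simp
  also have "\<dots> = four_block_mat (K ^\<^sub>m k * K + of_nat k \<cdot>\<^sub>m K ^\<^sub>m (k - 1) * 0\<^sub>m n n)
        (K ^\<^sub>m k * 1\<^sub>m n + of_nat k \<cdot>\<^sub>m K ^\<^sub>m (k - 1) * K)
        (0\<^sub>m n n * K + K ^\<^sub>m k * 0\<^sub>m n n) (0\<^sub>m n n * 1\<^sub>m n + K ^\<^sub>m k * K)"
    by (rule mult_four_block_mat) (use K Kk Kk1 in auto)
  also have "K ^\<^sub>m k * 1\<^sub>m n + of_nat k \<cdot>\<^sub>m K ^\<^sub>m (k - 1) * K = of_nat (Suc k) \<cdot>\<^sub>m K ^\<^sub>m (Suc k - 1)"
  proof (cases k)
    case 0
    then show ?thesis using K by (intro eq_matI) auto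
  next
    case (Suc l)
    have "of_nat k \<cdot>\<^sub>m K ^\<^sub>m (k - 1) * K = of_nat k \<cdot>\<^sub>m (K ^\<^sub>m (k - 1) * K)"
      by (rule mult_smult_assoc_mat[OF Kk1 K])
    also have "K ^\<^sub>m (k - 1) * K = K ^\<^sub>m k" using Suc by simp
    finally show ?thesis using Kk by (intro eq_matI) (auto simp: algebra_simps)
  qed
  also have "K ^\<^sub>m k * K + of_nat k \<cdot>\<^sub>m K ^\<^sub>m (k - 1) * 0\<^sub>m n n = K ^\<^sub>m Suc k"
  proof -
    have "K ^\<^sub>m k * K \<in> carrier_mat n n" using K Kk by auto
    moreover have "of_nat k \<cdot>\<^sub>m K ^\<^sub>m (k - 1) * 0\<^sub>m n n = 0\<^sub>m n n" using Kk1 by (metis right_mult_zero_mat smult_carrier_mat)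
    ultimately show ?thesis by simp
  qed
  also have "0\<^sub>m n n * K + K ^\<^sub>m k * 0\<^sub>m n n = 0\<^sub>m n n" using K Kk by simp
  also have "0\<^sub>m n n * 1\<^sub>m n + K ^\<^sub>m k * K = K ^\<^sub>m Suc k"
  proof -
    have "K ^\<^sub>m k * K \<in> carrier_mat n n" using K Kk by auto
    then show ?thesis by simp
  qed
  finally show ?case .
qed

lemma e1Q_index:
  assumes N: "0 < n1 * n2" and j: "j < 2 * (n1 * n2)"
  shows "e1Q n1 n2 x y k $ j = (if j < n1 * n2 then (kac2_mat n1 n2 x y ^\<^sub>m k) $$ (0, j)
           else of_nat k * (kac2_mat n1 n2 x y ^\<^sub>m (k - 1)) $$ (0, j - n1 * n2))"
proof -
  let ?K = "kac2_mat n1 n2 x y"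
  have K: "?K \<in> carrier_mat (n1*n2) (n1*n2)" unfolding kac2_gK by simp
  have Q: "Qmat n1 n2 x y ^\<^sub>m k = four_block_mat (?K ^\<^sub>m k) (of_nat k \<cdot>\<^sub>m ?K ^\<^sub>m (k - 1)) (0\<^sub>m (n1*n2) (n1*n2)) (?K ^\<^sub>m k)"
    unfolding Qmat_def by (rule pow_Q[OF K])
  have Kk: "?K ^\<^sub>m k \<in> carrier_mat (n1*n2) (n1*n2)" "?K ^\<^sub>m (k-1) \<in> carrier_mat (n1*n2) (n1*n2)" using K by auto
  have "e1Q n1 n2 x y k $ j = (Qmat n1 n2 x y ^\<^sub>m k) $$ (0, j)"
    unfolding e1Q_def by (rule index_row) (use Q Kk N j in auto)
  also have "\<dots> = (if j < n1 * n2 then (?K ^\<^sub>m k) $$ (0, j)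
           else (of_nat k \<cdot>\<^sub>m ?K ^\<^sub>m (k - 1)) $$ (0, j - n1 * n2))"
    unfolding Q using Kk N j by (subst index_mat_four_block(1)) auto
  also have "\<dots> = (if j < n1 * n2 then (?K ^\<^sub>m k) $$ (0, j)
           else of_nat k * (?K ^\<^sub>m (k - 1)) $$ (0, j - n1 * n2))"
  proof -
    have "\<not> j < n1*n2 \<Longrightarrow> j - n1*n2 < n1*n2" using j by arith
    then show ?thesis using carrier_matD[OF Kk(2)] N j by auto
  qed
  finally show ?thesis .
qed

lemma e1Q_dim: "e1Q n1 n2 x y k \<in> carrier_vec (2 * (n1 * n2))"
proof -
  have K: "kac2_mat n1 n2 x y \<in> carrier_mat (n1*n2) (n1*n2)" unfolding kac2_gK by simp
  have Q: "Qmat n1 n2 x y ^\<^sub>m k \<in> carrier_mat (2*(n1*n2)) (2*(n1*n2))"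
    unfolding Qmat_def using K by (metis four_block_carrier_mat mult_2 pow_carrier_mat)
  have "dim_col (Qmat n1 n2 x y ^\<^sub>m k) = 2*(n1*n2)" using carrier_matD(2)[OF Q] .
  then show ?thesis unfolding e1Q_def carrier_vec_def by simp
qed

lemma order_ge2:
  fixes q :: "complex poly"
  assumes "q \<noteq> 0" "poly q a = 0" "poly (pderiv q) a = 0"
  shows "2 \<le> order a q"
proof -
  have "pderiv q \<noteq> 0"
  proof
    assume "pderiv q = 0"
    then have "degree q = 0" by (simp add: pderiv_eq_0_iff)
    then obtain c where "q = [:c:]" by (metis degree_eq_zeroE)
    then show False using assms by simp
  qed
  then have "order a (pderiv q) \<noteq> 0" using assms(3) by (simp add: order_root)
  then show ?thesis using order_pderiv[OF assms(1,2)] by simp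
qed

lemma roots_count:
  fixes q :: "complex poly"
  assumes fin: "finite M" and M0: "0 \<notin> M"
    and roots: "\<And>a. a \<in> M \<Longrightarrow> poly q a = 0 \<and> poly (pderiv q) a = 0"
    and xm: "[:0,1:] ^ m dvd q" and q: "q \<noteq> 0"
  shows "m + 2 * card M \<le> degree q"
proof -
  have "[:0,1:] ^ m * (\<Prod>a\<in>M. [:-a,1:] ^ 2) dvd q \<and> degree ([:0,1:] ^ m * (\<Prod>a\<in>M. [:-a,1:] ^ 2)) = m + 2 * card M"
    using fin M0 roots
  proof (induction M rule: finite_induct)
    case empty
    then show ?case using xm by (simp add: degree_power_eq)
  next
    case (insert b M)
    define P where "P = [:0,1:] ^ m * (\<Prod>a\<in>M. [:-a,1:] ^ 2)"
    have IH: "P dvd q" "degree P = m + 2 * card M" using insert unfolding P_def by auto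
    then obtain r where r: "q = P * r" by (auto elim: dvdE)
    have Pb: "poly P b \<noteq> 0" using insert.prems(1) insert.hyps unfolding P_def
      by (auto simp: poly_prod)
    have "2 \<le> order b q" using order_ge2[OF q] insert.prems(2) by auto
    also have "order b q = order b P + order b r" using r q order_mult by metis
    also have "order b P = 0" using Pb by (rule order_0I)
    finally have "[:-b,1:] ^ 2 dvd r" using order_divides by auto
    then have "P * [:-b,1:] ^ 2 dvd q" using r by auto
    moreover have E: "[:0,1:] ^ m * (\<Prod>a\<in>insert b M. [:-a,1:] ^ 2) = P * [:-b,1:] ^ 2"
      using insert.hyps by (simp add: P_def mult_ac)
    moreover have "degree (P * [:-b,1:] ^ 2) = m + 2 * card (insert b M)"
    proof -
      have "P \<noteq> 0" using Pb by auto
      then have "degree (P * [:-b,1:] ^ 2) = degree P + degree ([:-b,1:] ^ 2)"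
        by (intro degree_mult_eq) auto
      also have "degree ([:-b,1:] ^ 2) = 2" by (simp add: degree_power_eq)
      finally show ?thesis using IH insert.hyps by simp
    qed
    ultimately show ?case by simp
  qed
  then show ?thesis using dvd_imp_degree_le q by metis
qed

lemma pderiv_sum': "pderiv (\<Sum>x\<in>A. p x) = (\<Sum>x\<in>A. pderiv (p x))"
  by (induct A rule: infinite_finite_induct) (simp_all add: pderiv_add)

lemma pow_eigen:
  fixes A :: "'a::field mat"
  assumes A: "A \<in> carrier_mat n n" and u: "u \<in> carrier_vec n" and Au: "A *\<^sub>v u = mu \<cdot>\<^sub>v u"
  shows "(A ^\<^sub>m k) *\<^sub>v u = mu ^ k \<cdot>\<^sub>v u"
proof (induction k)
  case 0
  then show ?case using A u by simp
next
  case (Suc k)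
  have "(A ^\<^sub>m Suc k) *\<^sub>v u = (A ^\<^sub>m k) *\<^sub>v (A *\<^sub>v u)"
    using assoc_mult_mat_vec[OF pow_carrier_mat[OF A] A u] by simp
  also have "\<dots> = mu \<cdot>\<^sub>v ((A ^\<^sub>m k) *\<^sub>v u)" unfolding Au
    by (rule mult_mat_vec[OF pow_carrier_mat[OF A] u])
  also have "\<dots> = mu ^ Suc k \<cdot>\<^sub>v u" unfolding Suc by (simp add: smult_smult_assoc)
  finally show ?case .
qed

definition Kc :: "nat \<Rightarrow> nat \<Rightarrow> real \<Rightarrow> real \<Rightarrow> complex mat" where
  "Kc n1 n2 x y = gK n1 n2 (kacg n1 (complex_of_real x)) (kacg n2 (complex_of_real y))"

definition is_eig :: "nat \<Rightarrow> nat \<Rightarrow> real \<Rightarrow> real \<Rightarrow> complex \<Rightarrow> bool" where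
  "is_eig n1 n2 x y mu \<longleftrightarrow> (\<exists>u. u \<in> carrier_vec (n1*n2) \<and> Kc n1 n2 x y *\<^sub>v u = mu \<cdot>\<^sub>v u \<and> u $ 0 = 1)"

lemma eig_test:
  assumes N: "0 < n1 * n2" and u: "u \<in> carrier_vec (n1*n2)"
    and Ku: "Kc n1 n2 x y *\<^sub>v u = mu \<cdot>\<^sub>v u" and u0: "u $ 0 = 1"
  shows "(\<Sum>j<n1*n2. complex_of_real ((kac2_mat n1 n2 x y ^\<^sub>m k) $$ (0,j)) * u $ j) = mu ^ k"
proof -
  let ?K = "kac2_mat n1 n2 x y"
  have K: "?K \<in> carrier_mat (n1*n2) (n1*n2)" unfolding kac2_gK by simp
  have KcK: "Kc n1 n2 x y = map_mat complex_of_real ?K" unfolding Kc_def map_kac2 ..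
  have Kc: "Kc n1 n2 x y \<in> carrier_mat (n1*n2) (n1*n2)" unfolding Kc_def by simp
  have P: "map_mat complex_of_real (?K ^\<^sub>m k) = Kc n1 n2 x y ^\<^sub>m k"
    unfolding KcK by (rule of_real_hom.mat_hom_pow[OF K])
  have "(Kc n1 n2 x y ^\<^sub>m k *\<^sub>v u) $ 0 = (\<Sum>j<n1*n2. (Kc n1 n2 x y ^\<^sub>m k) $$ (0,j) * u $ j)"
    by (rule mat_vec_index_sum[OF pow_carrier_mat[OF Kc] u N])
  also have "\<dots> = (\<Sum>j<n1*n2. complex_of_real ((?K ^\<^sub>m k) $$ (0,j)) * u $ j)"
  proof (rule sum.cong[OF refl])
    fix j assume "j \<in> {..<n1*n2}"
    then have "(Kc n1 n2 x y ^\<^sub>m k) $$ (0,j) = complex_of_real ((?K ^\<^sub>m k) $$ (0,j))"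
      unfolding P[symmetric] using N K by auto
    then show "(Kc n1 n2 x y ^\<^sub>m k) $$ (0,j) * u $ j = complex_of_real ((?K ^\<^sub>m k) $$ (0,j)) * u $ j" by simp
  qed
  finally show ?thesis using pow_eigen[OF Kc u Ku, of k] u0 N u by simp
qed

lemma comb_test:
  fixes c :: "nat \<Rightarrow> real"
  assumes N: "0 < n1 * n2" and eig: "is_eig n1 n2 x y mu" and I: "finite I"
    and comb: "\<And>j. j < 2*(n1*n2) \<Longrightarrow> (\<Sum>k\<in>I. c k * e1Q n1 n2 x y k $ j) = 0"
  shows "(\<Sum>k\<in>I. complex_of_real (c k) * mu ^ k) = 0"
    and "(\<Sum>k\<in>I. complex_of_real (c k) * of_nat k * mu ^ (k - 1)) = 0"
proof -
  let ?K = "kac2_mat n1 n2 x y"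
  let ?N = "n1 * n2"
  obtain u where u: "u \<in> carrier_vec ?N" and Ku: "Kc n1 n2 x y *\<^sub>v u = mu \<cdot>\<^sub>v u" and u0: "u $ 0 = 1"
    using eig unfolding is_eig_def by auto
  have "0 = (\<Sum>j<?N. complex_of_real (\<Sum>k\<in>I. c k * e1Q n1 n2 x y k $ j) * u $ j)"
    using comb by simp
  also have "\<dots> = (\<Sum>j<?N. \<Sum>k\<in>I. complex_of_real (c k) * (complex_of_real ((?K ^\<^sub>m k) $$ (0,j)) * u $ j))"
    by (rule sum.cong[OF refl]) (use N in \<open>auto simp: e1Q_index sum_distrib_right sum_distrib_left mult_ac\<close>)
  also have "\<dots> = (\<Sum>k\<in>I. complex_of_real (c k) * mu ^ k)"
    by (subst sum.swap) (simp add: sum_distrib_left[symmetric] eig_test[OF N u Ku u0])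
  finally show "(\<Sum>k\<in>I. complex_of_real (c k) * mu ^ k) = 0" by simp
  have "0 = (\<Sum>j<?N. complex_of_real (\<Sum>k\<in>I. c k * e1Q n1 n2 x y k $ (?N + j)) * u $ j)"
    using comb by simp
  also have "\<dots> = (\<Sum>j<?N. \<Sum>k\<in>I. (complex_of_real (c k) * of_nat k) * (complex_of_real ((?K ^\<^sub>m (k - 1)) $$ (0,j)) * u $ j))"
    by (rule sum.cong[OF refl]) (use N in \<open>auto simp: e1Q_index sum_distrib_right sum_distrib_left mult_ac\<close>)
  also have "\<dots> = (\<Sum>k\<in>I. complex_of_real (c k) * of_nat k * mu ^ (k - 1))"
    by (subst sum.swap) (simp add: sum_distrib_left[symmetric] eig_test[OF N u Ku u0])
  finally show "(\<Sum>k\<in>I. complex_of_real (c k) * of_nat k * mu ^ (k - 1)) = 0" by simp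
qed

lemma core:
  fixes c :: "nat \<Rightarrow> real"
  assumes N: "0 < n1 * n2" and I: "finite I" and lo: "\<And>k. k \<in> I \<Longrightarrow> m \<le> k"
    and hi: "\<And>k. k \<in> I \<Longrightarrow> k < m + 2 * card M"
    and M: "finite M" and M0: "0 \<notin> M" and eig: "\<And>mu. mu \<in> M \<Longrightarrow> is_eig n1 n2 x y mu"
    and comb: "\<And>j. j < 2*(n1*n2) \<Longrightarrow> (\<Sum>k\<in>I. c k * e1Q n1 n2 x y k $ j) = 0"
    and k: "k \<in> I"
  shows "c k = 0"
proof -
  define q where "q = (\<Sum>k\<in>I. monom (complex_of_real (c k)) k)"
  have roots: "poly q mu = 0 \<and> poly (pderiv q) mu = 0" if "mu \<in> M" for mu
  proof -
    have "poly q mu = (\<Sum>k\<in>I. complex_of_real (c k) * mu ^ k)"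
      unfolding q_def by (simp add: poly_sum poly_monom)
    moreover have "poly (pderiv q) mu = (\<Sum>k\<in>I. complex_of_real (c k) * of_nat k * mu ^ (k - 1))"
      unfolding q_def by (simp add: pderiv_sum' poly_sum pderiv_monom poly_monom mult_ac)
    ultimately show ?thesis using comb_test[OF N eig[OF that] I comb] by simp
  qed
  have xm: "[:0,1:] ^ m dvd q"
    unfolding q_def
  proof (rule dvd_sum)
    fix k assume "k \<in> I"
    then have "k = m + (k - m)" using lo by simp
    then have "monom (complex_of_real (c k)) k = [:0,1:] ^ m * Polynomial.smult (complex_of_real (c k)) ([:0,1:] ^ (k - m))"
      by (metis monom_altdef mult_smult_right power_add)
    then show "[:0,1:] ^ m dvd monom (complex_of_real (c k)) k" by (metis dvd_triv_left)
  qed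
  have "q = 0"
  proof (rule ccontr)
    assume q: "q \<noteq> 0"
    have "m + 2 * card M \<le> degree q" by (rule roots_count[OF M M0 roots xm q])
    moreover have "degree q \<le> m + 2 * card M - 1"
      unfolding q_def
    proof (rule degree_sum_le[OF I])
      fix k assume "k \<in> I"
      then show "degree (monom (complex_of_real (c k)) k) \<le> m + 2 * card M - 1"
        using hi[of k] degree_monom_le[of "complex_of_real (c k)" k] by linarith
    qed
    moreover have "0 < m + 2 * card M" using hi[OF k] by linarith
    ultimately show False by linarith
  qed
  then have "coeff q k = 0" by simp
  moreover have "coeff q k = complex_of_real (c k)"
    unfolding q_def using I k by (simp add: coeff_sum sum.delta)
  ultimately show ?thesis by simp
qed

lemma indep_from_core:
  fixes f :: "nat \<Rightarrow> real vec"
  assumes I: "finite I" and F: "\<And>k. k \<in> I \<Longrightarrow> f k \<in> carrier_vec n"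
    and H: "\<And>c k. (\<And>j. j < n \<Longrightarrow> (\<Sum>k\<in>I. c k * f k $ j) = 0) \<Longrightarrow> k \<in> I \<Longrightarrow> c k = 0"
  shows "inj_on f I" and "\<not> lin_dep_vecs n (f ` I)"
proof -
  interpret vec_space "TYPE(real)" n .
  show inj: "inj_on f I"
  proof (rule inj_onI, rule ccontr)
    fix a b assume ab: "a \<in> I" "b \<in> I" "f a = f b" "a \<noteq> b"
    define c where "c = (\<lambda>k. if k = a then 1 else if k = b then -1 else (0::real))"
    have "c a = 0"
    proof (rule H[OF _ ab(1)])
      fix j assume "j < n"
      have "(\<Sum>k\<in>I. c k * f k $ j) = (\<Sum>k\<in>I. (if k = a then f a $ j else 0) + (if k = b then - f b $ j else 0))"
        by (rule sum.cong) (auto simp: c_def ab(4))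
      also have "\<dots> = 0" using ab I by (simp add: sum.distrib sum.delta)
      finally show "(\<Sum>k\<in>I. c k * f k $ j) = 0" .
    qed
    then show False by (simp add: c_def)
  qed
  show "\<not> lin_dep_vecs n (f ` I)"
  proof
    assume "lin_dep_vecs n (f ` I)"
    then obtain A a v where A: "finite A" "A \<subseteq> f ` I" and lc: "lincomb a A = 0\<^sub>v n"
      and vA: "v \<in> A" and av: "a v \<noteq> 0"
      unfolding lin_dep_def by auto
    have Ac: "A \<subseteq> carrier_vec n" using A F by auto
    define c where "c = (\<lambda>k. if f k \<in> A then a (f k) else 0)"
    from vA A obtain k0 where k0: "k0 \<in> I" "v = f k0" by auto
    have "c k0 = 0"
    proof (rule H[OF _ k0(1)])
      fix j assume j: "j < n"
      have "(\<Sum>k\<in>I. c k * f k $ j) = (\<Sum>k\<in>{k\<in>I. f k \<in> A}. a (f k) * f k $ j)"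
        unfolding c_def using I by (simp add: sum.inter_filter[symmetric] if_distrib if_distribR cong: if_cong)
      also have "\<dots> = (\<Sum>x\<in>f ` {k\<in>I. f k \<in> A}. a x * x $ j)"
        by (rule sum.reindex[symmetric, unfolded comp_def]) (rule inj_on_subset[OF inj], auto)
      also have "f ` {k\<in>I. f k \<in> A} = A" using A by auto
      also have "(\<Sum>x\<in>A. a x * x $ j) = lincomb a A $ j" by (rule lincomb_index[OF j Ac, symmetric])
      also have "\<dots> = 0" using lc j by simp
      finally show "(\<Sum>k\<in>I. c k * f k $ j) = 0" .
    qed
    then show False using av k0 vA by (simp add: c_def)
  qed
qed

definition aval :: "nat \<Rightarrow> nat \<Rightarrow> int" where "aval n r = int n - 1 - 2 * int r"

definition Ev :: "nat \<Rightarrow> nat \<Rightarrow> complex \<Rightarrow> complex \<Rightarrow> nat \<times> nat \<Rightarrow> complex" where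
  "Ev n1 n2 z1 z2 p = of_int (aval n1 (fst p)) * z1 + of_int (aval n2 (snd p)) * z2"

lemma aval_Nset: "r < n \<Longrightarrow> aval n r \<in> Nset n"
  unfolding aval_def Nset_def by auto

lemma aval_neg: "r < n \<Longrightarrow> - aval n r = aval n (n - 1 - r)"
  unfolding aval_def by auto

lemma aval_inj: "aval n r = aval n r' \<Longrightarrow> r = r'"
  unfolding aval_def by auto

lemma of_nat_aval: "r < n \<Longrightarrow> (of_nat (n - 1 - r) - of_nat r :: complex) = of_int (aval n r)"
  unfolding aval_def by (simp add: of_nat_diff)

lemma is_eig_Ev:
  assumes r1: "r1 < n1" and r2: "r2 < n2"
  shows "is_eig n1 n2 t1 t2 (Ev n1 n2 (csqrt (complex_of_real t1)) (csqrt (complex_of_real t2)) (r1, r2))"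
proof -
  let ?z1 = "csqrt (complex_of_real t1)"
  let ?z2 = "csqrt (complex_of_real t2)"
  have z1: "?z1 * ?z1 = complex_of_real t1" by (metis power2_csqrt power2_eq_square)
  have z2: "?z2 * ?z2 = complex_of_real t2" by (metis power2_csqrt power2_eq_square)
  have N: "0 < n1 * n2" using r1 r2 by simp
  define u where "u = vkron n1 n2 (kvec n1 ?z1 r1) (kvec n2 ?z2 r2)"
  have "Kc n1 n2 t1 t2 = gK n1 n2 (kacg n1 (?z1 * ?z1)) (kacg n2 (?z2 * ?z2))"
    unfolding Kc_def z1 z2 ..
  also have "\<dots> *\<^sub>v u = (?z1 * (of_nat (n1 - 1 - r1) - of_nat r1) + ?z2 * (of_nat (n2 - 1 - r2) - of_nat r2)) \<cdot>\<^sub>v u"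
    unfolding u_def by (rule gK_eigen[OF kacg_carrier kacg_carrier kvec_eigen(3)[OF r1] kvec_eigen(3)[OF r2] kvec_eigen(1)[OF r1] kvec_eigen(1)[OF r2]])
  also have "?z1 * (of_nat (n1 - 1 - r1) - of_nat r1) + ?z2 * (of_nat (n2 - 1 - r2) - of_nat r2)
      = Ev n1 n2 ?z1 ?z2 (r1, r2)"
    unfolding Ev_def of_nat_aval[OF r1] of_nat_aval[OF r2] by (simp add: mult_ac)
  finally have Ku: "Kc n1 n2 t1 t2 *\<^sub>v u = Ev n1 n2 ?z1 ?z2 (r1, r2) \<cdot>\<^sub>v u" .
  have "u \<in> carrier_vec (n1*n2)" unfolding u_def vkron_def by simp
  moreover have "u $ 0 = 1" unfolding u_def vkron_def using N kvec_eigen(2)[OF r1, where z="?z1"] kvec_eigen(2)[OF r2, where z="?z2"] by simp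
  ultimately show ?thesis unfolding is_eig_def using Ku by blast
qed

lemma Ev_inj:
  assumes "indep_pair n1 n2 z1 z2"
  shows "inj_on (Ev n1 n2 z1 z2) ({..<n1} \<times> {..<n2})"
proof (rule inj_onI)
  fix p q assume p: "p \<in> {..<n1} \<times> {..<n2}" and q: "q \<in> {..<n1} \<times> {..<n2}"
    and e: "Ev n1 n2 z1 z2 p = Ev n1 n2 z1 z2 q"
  have "of_int (aval n1 (fst p) - aval n1 (fst q)) * z1 + of_int (aval n2 (snd p) - aval n2 (snd q)) * z2 = 0"
    using e unfolding Ev_def by (simp add: algebra_simps)
  moreover have m: "aval n1 (fst p) \<in> Nset n1" "aval n1 (fst q) \<in> Nset n1"
    "aval n2 (snd p) \<in> Nset n2" "aval n2 (snd q) \<in> Nset n2"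
    using p q by (auto intro!: aval_Nset)
  ultimately have "aval n1 (fst p) = aval n1 (fst q) \<and> aval n2 (snd p) = aval n2 (snd q)"
    using assms[unfolded indep_pair_def, rule_format, OF m] by blast
  then show "p = q" using aval_inj by (metis prod.expand)
qed

lemma Ev_zero:
  assumes "indep_pair n1 n2 z1 z2" and r1: "r1 < n1" and r2: "r2 < n2"
    and "Ev n1 n2 z1 z2 (r1, r2) = 0"
  shows "aval n1 r1 = 0 \<and> aval n2 r2 = 0"
proof -
  let ?b1 = "aval n1 (n1 - 1 - r1)" and ?b2 = "aval n2 (n2 - 1 - r2)"
  have "of_int (aval n1 r1 - ?b1) * z1 + of_int (aval n2 r2 - ?b2) * z2 = 2 * Ev n1 n2 z1 z2 (r1, r2)"
    unfolding Ev_def aval_neg[OF r1, symmetric] aval_neg[OF r2, symmetric] by (simp add: algebra_simps)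
  also have "\<dots> = 0" using assms(4) by simp
  finally have E0: "of_int (aval n1 r1 - ?b1) * z1 + of_int (aval n2 r2 - ?b2) * z2 = 0" .
  have m: "aval n1 r1 \<in> Nset n1" "?b1 \<in> Nset n1" "aval n2 r2 \<in> Nset n2" "?b2 \<in> Nset n2"
    using r1 r2 by (auto intro!: aval_Nset)
  have "aval n1 r1 = ?b1 \<and> aval n2 r2 = ?b2"
    using assms(1)[unfolded indep_pair_def, rule_format, OF m] E0 by blast
  then show ?thesis using aval_neg[OF r1] aval_neg[OF r2] by simp
qed



definition v0 :: "nat \<Rightarrow> nat \<Rightarrow> real \<Rightarrow> real \<Rightarrow> real vec" where
  "v0 n1 n2 x y = vkron n1 n2 (nvec n1 x) (nvec n2 y)"

lemma v0_props:
  assumes o1: "odd n1" and o2: "odd n2"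
  shows "v0 n1 n2 x y \<in> carrier_vec (n1*n2)"
    and "v0 n1 n2 x y $ 0 = 1"
    and "\<And>j. j < n1*n2 \<Longrightarrow> odd j \<Longrightarrow> v0 n1 n2 x y $ j = 0"
    and "\<And>k. 1 \<le> k \<Longrightarrow> (\<Sum>j<n1*n2. (kac2_mat n1 n2 x y ^\<^sub>m k) $$ (0,j) * v0 n1 n2 x y $ j) = 0"
proof -
  have n: "0 < n1" "0 < n2" using o1 o2 by (auto intro!: odd_pos)
  show vc: "v0 n1 n2 x y \<in> carrier_vec (n1*n2)" unfolding v0_def vkron_def by simp
  show "v0 n1 n2 x y $ 0 = 1" unfolding v0_def vkron_def using n nvec_null(2)[OF o1, of x] nvec_null(2)[OF o2, of y] by simp
  show "v0 n1 n2 x y $ j = 0" if j: "j < n1*n2" "odd j" for j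
  proof -
    have jd: "j div n2 < n1" "j mod n2 < n2" using j n by (auto simp: less_mult_imp_div_less)
    have "j = n2 * (j div n2) + j mod n2" by simp
    then have "odd (j div n2) \<or> odd (j mod n2)" using j(2) o2 by (metis even_add even_mult_iff)
    then show ?thesis unfolding v0_def vkron_def using j jd nvec_null(4)[OF o1, of _ x] nvec_null(4)[OF o2, of _ y] by auto
  qed
  have K: "kac2_mat n1 n2 x y = gK n1 n2 (kacg n1 x) (kacg n2 y)" unfolding kac2_gK kac_mat_eq ..
  have Kc: "kac2_mat n1 n2 x y \<in> carrier_mat (n1*n2) (n1*n2)" unfolding K by simp
  have z1: "kacg n1 x *\<^sub>v nvec n1 x = 0 \<cdot>\<^sub>v nvec n1 x" using nvec_null(1)[OF o1, of x] nvec_null(3)[OF o1, of x] by simp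
  have z2: "kacg n2 y *\<^sub>v nvec n2 y = 0 \<cdot>\<^sub>v nvec n2 y" using nvec_null(1)[OF o2, of y] nvec_null(3)[OF o2, of y] by simp
  have Kv: "kac2_mat n1 n2 x y *\<^sub>v v0 n1 n2 x y = 0 \<cdot>\<^sub>v v0 n1 n2 x y"
    unfolding K v0_def using gK_eigen[OF kacg_carrier kacg_carrier nvec_null(3)[OF o1, of x] nvec_null(3)[OF o2, of y] z1 z2] by simp
  show "(\<Sum>j<n1*n2. (kac2_mat n1 n2 x y ^\<^sub>m k) $$ (0,j) * v0 n1 n2 x y $ j) = 0" if k: "1 \<le> k" for k
  proof -
    have "(\<Sum>j<n1*n2. (kac2_mat n1 n2 x y ^\<^sub>m k) $$ (0,j) * v0 n1 n2 x y $ j) = ((kac2_mat n1 n2 x y ^\<^sub>m k) *\<^sub>v v0 n1 n2 x y) $ 0"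
      by (rule mat_vec_index_sum[symmetric, OF pow_carrier_mat[OF Kc] vc]) (use n in simp)
    also have "\<dots> = ((0::real) ^ k \<cdot>\<^sub>v v0 n1 n2 x y) $ 0" by (subst pow_eigen[OF Kc vc Kv]) simp
    also have "\<dots> = 0" using k vc n by simp
    finally show ?thesis .
  qed
qed

lemma Ev_set:
  assumes ind: "indep_pair n1 n2 (csqrt (complex_of_real t1)) (csqrt (complex_of_real t2))"
    and P: "P \<subseteq> {..<n1} \<times> {..<n2}"
    and nz: "\<And>r1 r2. (r1, r2) \<in> P \<Longrightarrow> aval n1 r1 = 0 \<Longrightarrow> aval n2 r2 = 0 \<Longrightarrow> False"
  shows "finite (Ev n1 n2 (csqrt (complex_of_real t1)) (csqrt (complex_of_real t2)) ` P)"
    "card (Ev n1 n2 (csqrt (complex_of_real t1)) (csqrt (complex_of_real t2)) ` P) = card P"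
    "0 \<notin> (Ev n1 n2 (csqrt (complex_of_real t1)) (csqrt (complex_of_real t2)) ` P)"
    "\<And>mu. mu \<in> (Ev n1 n2 (csqrt (complex_of_real t1)) (csqrt (complex_of_real t2)) ` P) \<Longrightarrow> is_eig n1 n2 t1 t2 mu"
proof -
  define M where "M \<equiv> Ev n1 n2 (csqrt (complex_of_real t1)) (csqrt (complex_of_real t2)) ` P"
  show "finite M" "card M = card P" "0 \<notin> M" "\<And>mu. mu \<in> M \<Longrightarrow> is_eig n1 n2 t1 t2 mu"
  proof -
  have fP: "finite P" using P finite_subset by blast
  show "finite M" unfolding M_def using fP by simp
  show "card M = card P" unfolding M_def by (rule card_image[OF inj_on_subset[OF Ev_inj[OF ind] P]])
  show "0 \<notin> M"
  proof
    assume "0 \<in> M"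
    then obtain r1 r2 where r: "(r1, r2) \<in> P" and e: "Ev n1 n2 (csqrt (complex_of_real t1)) (csqrt (complex_of_real t2)) (r1, r2) = 0"
      unfolding M_def by auto
    have "r1 < n1" "r2 < n2" using r P by auto
    from Ev_zero[OF ind this e] nz[OF r] show False by blast
  qed
  show "is_eig n1 n2 t1 t2 mu" if muM: "mu \<in> M" for mu
  proof -
    obtain p where p: "p \<in> P" and mu0: "mu = Ev n1 n2 (csqrt (complex_of_real t1)) (csqrt (complex_of_real t2)) p"
      using muM unfolding M_def by auto
    obtain r1 r2 where pr: "p = (r1, r2)" by (cases p)
    have r: "(r1, r2) \<in> P" and mu: "mu = Ev n1 n2 (csqrt (complex_of_real t1)) (csqrt (complex_of_real t2)) (r1, r2)"
      using p mu0 pr by auto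
    have "r1 < n1" "r2 < n2" using r P by auto
    then show ?thesis unfolding mu by (rule is_eig_Ev)
  qed
  qed
qed

lemma even_case:
  assumes n1: "n1 \<ge> 2" and n2: "n2 \<ge> 2"
    and ind: "indep_pair n1 n2 (csqrt (complex_of_real t1)) (csqrt (complex_of_real t2))"
    and ev: "even (n1 * n2)"
  shows "lin_indep_family (2 * (n1 * n2)) (map (e1Q n1 n2 t1 t2) [s ..< s + 2 * (n1 * n2)])"
proof -
  let ?P = "{..<n1} \<times> {..<n2}"
  let ?M = "Ev n1 n2 (csqrt (complex_of_real t1)) (csqrt (complex_of_real t2)) ` ?P"
  have nz: "False" if "aval n1 r1 = 0" "aval n2 r2 = 0" for r1 r2
  proof -
    have "n1 = 2 * r1 + 1" "n2 = 2 * r2 + 1" using that unfolding aval_def by auto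
    then show False using ev by auto
  qed
  note MP = Ev_set[OF ind subset_refl nz]
  have cM: "card ?M = n1 * n2" using MP(2) by (simp add: card_cartesian_product)
  have N: "0 < n1 * n2" using n1 n2 by simp
  let ?I = "{s..<s + 2 * (n1 * n2)}"
  have H: "c k = 0" if "\<And>j. j < 2 * (n1 * n2) \<Longrightarrow> (\<Sum>k\<in>?I. c k * e1Q n1 n2 t1 t2 k $ j) = 0" "k \<in> ?I" for c k
    by (rule core[OF N _ _ _ MP(1) MP(3) MP(4) that(1) that(2)]) (auto simp: cM)
  have R: "inj_on (e1Q n1 n2 t1 t2) ?I" "\<not> lin_dep_vecs (2*(n1*n2)) (e1Q n1 n2 t1 t2 ` ?I)"
    by (rule indep_from_core[where f = "e1Q n1 n2 t1 t2" and I = ?I and n = "2*(n1*n2)"],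
        simp, rule e1Q_dim, rule H, assumption, assumption)+
  show ?thesis unfolding lin_indep_family_def
    using R by (simp add: distinct_map)
qed

lemma card_gt_dim_lin_dep:
  fixes S :: "real vec set"
  assumes "S \<subseteq> carrier_vec n" "finite S" "card S > n"
  shows "lin_dep_vecs n S"
proof -
  interpret vec_space "TYPE(real)" n .
  show ?thesis using li_le_dim(2)[OF fin_dim assms(1)] assms(3) dim_is_n by auto
qed

lemma sum_split_add: "(\<Sum>i<m+n. g i) = (\<Sum>i<m. g i) + (\<Sum>i<n. g (m + i))" for m n :: nat
  by (induction n) (simp_all add: add_ac)

locale oddsetup =
  fixes n1 n2 :: nat and t1 t2 :: real
  assumes n1: "n1 \<ge> 2" and n2: "n2 \<ge> 2"
    and ind: "indep_pair n1 n2 (csqrt (complex_of_real t1)) (csqrt (complex_of_real t2))"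
    and odd: "odd (n1 * n2)"
begin

abbreviation "N \<equiv> n1 * n2"
abbreviation "f \<equiv> e1Q n1 n2 t1 t2"
abbreviation "P' \<equiv> ({..<n1} \<times> {..<n2}) - {(n1 div 2, n2 div 2)}"
abbreviation "M' \<equiv> Ev n1 n2 (csqrt (complex_of_real t1)) (csqrt (complex_of_real t2)) ` P'"

lemma o1: "odd n1" and o2: "odd n2" using odd by auto

lemma Npos: "0 < N" using n1 n2 by simp

lemma MP: "finite M'" "card M' = card P'" "0 \<notin> M'" "\<And>mu. mu \<in> M' \<Longrightarrow> is_eig n1 n2 t1 t2 mu"
proof -
  have nz: "False" if "(r1, r2) \<in> P'" "aval n1 r1 = 0" "aval n2 r2 = 0" for r1 r2
  proof -
    have "r1 = n1 div 2" "r2 = n2 div 2" using that(2,3) o1 o2 unfolding aval_def by presburger+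
    then show False using that(1) by simp
  qed
  show "finite M'" "card M' = card P'" "0 \<notin> M'" "\<And>mu. mu \<in> M' \<Longrightarrow> is_eig n1 n2 t1 t2 mu"
  proof -
    have sub: "P' \<subseteq> {..<n1} \<times> {..<n2}" by blast
    note E = Ev_set[OF ind sub]
    show "finite M'" by (rule E(1)) (rule nz)
    show "card M' = card P'" by (rule E(2)) (rule nz)
    show "0 \<notin> M'" by (rule E(3)) (rule nz)
    show "\<And>mu. mu \<in> M' \<Longrightarrow> is_eig n1 n2 t1 t2 mu" by (rule E(4)) (rule nz, assumption+)
  qed
qed

lemma cardP': "card P' = N - 1"
proof -
  have "(n1 div 2, n2 div 2) \<in> {..<n1} \<times> {..<n2}" using n1 n2 by auto
  then show ?thesis by (simp add: card_cartesian_product)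
qed

lemma Lam_indep: "inj_on f {2..<2*N}" "\<not> lin_dep_vecs (2*N) (f ` {2..<2*N})"
proof -
  have H: "c k = 0" if "\<And>j. j < 2 * N \<Longrightarrow> (\<Sum>k\<in>{2..<2*N}. c k * f k $ j) = 0" "k \<in> {2..<2*N}" for c k
  proof (rule core[OF Npos _ _ _ MP(1) MP(3) MP(4) that(1) that(2)])
    fix k assume "k \<in> {2..<2*N}"
    then show "k < 2 + 2 * card M'" using MP(2) cardP' Npos by auto
  qed auto
  show "inj_on f {2..<2*N}" "\<not> lin_dep_vecs (2*N) (f ` {2..<2*N})"
    by (rule indep_from_core[where f = f and I = "{2..<2*N}" and n = "2*N"],
        simp, rule e1Q_dim, rule H, assumption, assumption)+
qed

lemma fs_notin:
  assumes s: "s \<ge> 2 * N"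
  shows "f s \<notin> f ` {2..<2*N}"
proof
  assume "f s \<in> f ` {2..<2*N}"
  then obtain k where k: "k \<in> {2..<2*N}" and fk: "f s = f k" by auto
  have ks: "k \<noteq> s" "k < s" using k s by auto
  let ?mu = "Ev n1 n2 (csqrt (complex_of_real t1)) (csqrt (complex_of_real t2)) (0, 0)"
  have "(0, 0) \<in> P'" using n1 n2 o1 by auto
  then have mu: "?mu \<in> M'" by blast
  have mu0: "?mu \<noteq> 0" using mu MP(3) by auto
  define c where "c = (\<lambda>i. if i = s then 1 else - (1::real))"
  have comb: "(\<Sum>i\<in>{k, s}. c i * f i $ j) = 0" if "j < 2 * N" for j
    using ks fk by (simp add: c_def)
  note T = comb_test[OF Npos MP(4)[OF mu] _ comb]
  have e1: "?mu ^ s = ?mu ^ k" using T(1) ks by (simp add: c_def)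
  have e2: "of_nat s * ?mu ^ (s - 1) = of_nat k * ?mu ^ (k - 1)" using T(2) ks by (simp add: c_def)
  define nu where "nu = ?mu"
  have e1': "nu ^ s = nu ^ k" and e2': "of_nat s * nu ^ (s - 1) = of_nat k * nu ^ (k - 1)" and nu0: "nu \<noteq> 0"
    using e1 e2 mu0 unfolding nu_def by auto
  have ps: "nu ^ s = nu * nu ^ (s - 1)" using s Npos by (cases s) auto
  have pk: "nu ^ k = nu * nu ^ (k - 1)" using k by (cases k) auto
  have "of_nat s * nu ^ s = nu * (of_nat s * nu ^ (s - 1))" unfolding ps by (simp add: algebra_simps)
  also have "\<dots> = nu * (of_nat k * nu ^ (k - 1))" unfolding e2' ..
  also have "\<dots> = of_nat k * nu ^ k" unfolding pk by (simp add: algebra_simps)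
  finally have "(of_nat s - of_nat k) * nu ^ s = 0" using e1' by (simp add: algebra_simps)
  then have "(of_nat s :: complex) = of_nat k" using nu0 by simp
  then show False using ks by simp
qed

definition "vv = v0 n1 n2 t1 t2"
definition "E1 = vec (2*N) (\<lambda>j. if j < N then vv $ j else 0)"
definition "E2 = vec (2*N) (\<lambda>j. if j < N then 0 else vv $ (j - N))"
definition "phi w x = (\<Sum>i<2*N. x $ i * w $ i)"

lemma split2N: "(\<Sum>i<2*N. g i) = (\<Sum>i<N. g i) + (\<Sum>i<N. g (N + i))"
  using sum_split_add[where m=N and n=N and g=g] by (simp add: mult_2)

lemma phi1_f: "1 \<le> k \<Longrightarrow> phi E1 (f k) = 0"
proof -
  assume k: "1 \<le> k"
  have "phi E1 (f k) = (\<Sum>i<N. (kac2_mat n1 n2 t1 t2 ^\<^sub>m k) $$ (0,i) * vv $ i)"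
    unfolding phi_def split2N E1_def using Npos by (simp add: e1Q_index)
  also have "\<dots> = 0" unfolding vv_def by (rule v0_props(4)[OF o1 o2 k])
  finally show ?thesis .
qed

lemma phi2_f: "2 \<le> k \<Longrightarrow> phi E2 (f k) = 0"
proof -
  assume k: "2 \<le> k"
  have "phi E2 (f k) = of_nat k * (\<Sum>i<N. (kac2_mat n1 n2 t1 t2 ^\<^sub>m (k - 1)) $$ (0,i) * vv $ i)"
    unfolding phi_def split2N E2_def using Npos by (simp add: e1Q_index sum_distrib_left mult_ac)
  also have "(\<Sum>i<N. (kac2_mat n1 n2 t1 t2 ^\<^sub>m (k - 1)) $$ (0,i) * vv $ i) = 0"
    unfolding vv_def by (rule v0_props(4)[OF o1 o2]) (use k in simp)
  finally show ?thesis by simp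
qed

lemma sumsq_pos: "(\<Sum>i<N. vv $ i * vv $ i) \<noteq> 0"
proof -
  have "vv $ 0 * vv $ 0 \<le> (\<Sum>i<N. vv $ i * vv $ i)"
    by (rule member_le_sum) (use Npos in auto)
  then show ?thesis using v0_props(2)[OF o1 o2] unfolding vv_def by auto
qed

lemma phi_E: "phi E1 E1 \<noteq> 0" "phi E2 E2 \<noteq> 0" "phi E1 E2 = 0" "phi E2 E1 = 0"
  unfolding phi_def split2N E1_def E2_def using sumsq_pos by simp_all

lemma E_carrier: "E1 \<in> carrier_vec (2*N)" "E2 \<in> carrier_vec (2*N)"
  unfolding E1_def E2_def by simp_all

lemma Lam_s_dep:
  assumes s: "s \<ge> 2 * N"
  shows "lin_dep_vecs (2*N) (f ` {2..<2*N} \<union> {f s})"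
proof -
  interpret vec_space "TYPE(real)" "2*N" .
  let ?J = "insert s {2..<2*N}"
  let ?S = "f ` ?J"
  have SS: "f ` {2..<2*N} \<union> {f s} = ?S" by auto
  have sJ: "s \<notin> {2..<2*N}" using s by auto
  have sJ': "{2..<2*N} - {s} = {2..<2*N}" using sJ by auto
  have injJ: "inj_on f ?J" using Lam_indep(1) fs_notin[OF s] sJ' by simp
  have N1: "2 \<le> 2*N" using Npos by linarith
  have "card ?S = Suc (2 * N - 2)"
    using card_image[OF injJ] sJ by simp
  then have cS: "card ?S = 2 * N - 1" using N1 by linarith
  have phiS: "phi E1 x = 0" "phi E2 x = 0" if "x \<in> ?S" for x
  proof -
    have s2: "2 \<le> s" using s N1 by linarith
    show "phi E1 x = 0" "phi E2 x = 0" using that phi1_f phi2_f s2 by auto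
  qed
  have E1S: "E1 \<notin> ?S" using phiS(1) phi_E(1) by blast
  have E2S: "E2 \<notin> ?S" using phiS(2) phi_E(2) by blast
  have E12: "E1 \<noteq> E2" using phi_E(1,4) by auto
  let ?T = "insert E1 (insert E2 ?S)"
  have Sc: "?S \<subseteq> carrier_vec (2*N)" using e1Q_dim by auto
  have Tc: "?T \<subseteq> carrier_vec (2*N)" using Sc E_carrier by auto
  have fT: "finite ?T" by simp
  have cT: "card ?T = 2 * N + 1" using cS E1S E2S E12 Npos by simp
  have "lin_dep ?T" by (rule card_gt_dim_lin_dep[OF Tc fT]) (use cT in simp)
  from finite_lin_dep[OF fT this Tc] obtain a v where
    lc: "lincomb a ?T = 0\<^sub>v (2*N)" and vT: "v \<in> ?T" and av: "a v \<noteq> 0" by auto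
  have coord: "(\<Sum>x\<in>?T. a x * x $ i) = 0" if "i < 2*N" for i
    using lincomb_index[OF that Tc, of a] lc that by simp
  have phisum: "(\<Sum>x\<in>?T. a x * phi w x) = 0" for w
  proof -
    have "(\<Sum>x\<in>?T. a x * phi w x) = (\<Sum>i<2*N. (\<Sum>x\<in>?T. a x * x $ i) * w $ i)"
      unfolding phi_def by (simp add: sum_distrib_left sum_distrib_right mult_ac) (rule sum.swap)
    also have "\<dots> = 0" using coord by simp
    finally show ?thesis .
  qed
  have "(\<Sum>x\<in>?T. a x * phi E1 x) = a E1 * phi E1 E1"
    using E1S E2S E12 phiS(1) phi_E(3) by (simp add: sum.neutral)
  then have aE1: "a E1 = 0" using phisum[of E1] phi_E(1) by simp
  have "(\<Sum>x\<in>?T. a x * phi E2 x) = a E2 * phi E2 E2"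
    using E1S E2S E12 phiS(2) phi_E(4) by (simp add: sum.neutral)
  then have aE2: "a E2 = 0" using phisum[of E2] phi_E(2) by simp
  have vS: "v \<in> ?S" using vT av aE1 aE2 by auto
  have "lincomb a ?S = 0\<^sub>v (2*N)"
  proof (rule eq_vecI)
    fix i assume "i < dim_vec (0\<^sub>v (2*N) :: real vec)"
    then have i: "i < 2*N" by simp
    have "lincomb a ?S $ i = (\<Sum>x\<in>?S. a x * x $ i)" by (rule lincomb_index[OF i Sc])
    also have "\<dots> = (\<Sum>x\<in>?T. a x * x $ i)" using E1S E2S E12 aE1 aE2 by simp
    also have "\<dots> = 0" by (rule coord[OF i])
    finally show "lincomb a ?S $ i = 0\<^sub>v (2*N) $ i" using i by simp
  qed (use lincomb_dim[OF _ Sc] in simp)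
  then have "lin_dep ?S" by (intro lin_dep_crit[where A = ?S and S = ?S and a = a and v = v]) (use vS av in auto)
  then show ?thesis unfolding SS .
qed

end

lemma span_comb:
  fixes W :: "real vec set" and C :: "nat \<Rightarrow> real vec"
  assumes W: "W \<subseteq> carrier_vec n" and Ca: "Ca \<in> carrier_vec n"
    and CW: "\<And>t. t < h \<Longrightarrow> C t \<in> W"
    and eq: "\<And>i. i < n \<Longrightarrow> Ca $ i = (\<Sum>t<h. coef t * C t $ i)"
  shows "Ca \<in> span_vecs n W"
proof -
  interpret vec_space "TYPE(real)" n .
  let ?xs = "map (\<lambda>t. coef t \<cdot>\<^sub>v C t) [0..<h]"
  have Cc: "C t \<in> carrier_vec n" if "t < h" for t using CW[OF that] W by blast
  have xc: "x \<in> carrier_vec n" if "x \<in> set ?xs" for x using that Cc by auto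
  have dimS: "dim_vec (sumlist ?xs) = n" by (rule sumlist_dim[OF xc])
  have "Ca = sumlist ?xs"
  proof (rule eq_vecI)
    fix i assume "i < dim_vec (sumlist ?xs)"
    then have i: "i < n" using dimS by simp
    have "sumlist ?xs $ i = sum_list (map (\<lambda>x. x $ i) ?xs)" by (rule sumlist_vec_index[OF xc i])
    also have "\<dots> = (\<Sum>t<h. coef t * C t $ i)"
    proof -
      have "sum_list (map (\<lambda>x. x $ i) ?xs) = sum_list (map (\<lambda>t. coef t * C t $ i) [0..<h])"
        unfolding map_map comp_def
      proof (rule arg_cong[where f = sum_list], rule map_cong[OF refl])
        fix t assume "t \<in> set [0..<h]"
        then have "dim_vec (C t) = n" using Cc by auto
        then show "(coef t \<cdot>\<^sub>v C t) $ i = coef t * C t $ i" using i by simp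
      qed
      also have "\<dots> = (\<Sum>t<h. coef t * C t $ i)"
        by (simp add: sum_set_upt_conv_sum_list_nat[symmetric] atLeast0LessThan)
      finally show ?thesis .
    qed
    finally show "Ca $ i = sumlist ?xs $ i" using eq[OF i] by simp
  qed (use Ca dimS in simp)
  also have "\<dots> \<in> span W"
  proof (rule sumlist_in_span[OF W])
    fix x assume "x \<in> set ?xs"
    then obtain t where t: "t < h" "x = coef t \<cdot>\<^sub>v C t" by auto
    show "x \<in> span W" unfolding t(2) by (rule smult_in_span[OF W span_mem[OF W CW[OF t(1)]]])
  qed
  finally show ?thesis .
qed

lemma sum_odd_zero:
  fixes g :: "nat \<Rightarrow> real"
  assumes "\<And>j. j < 2*h+1 \<Longrightarrow> odd j \<Longrightarrow> g j = 0"
  shows "(\<Sum>j<2*h+1. g j) = g 0 + (\<Sum>t<h. g (2 + 2*t))"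
  using assms
proof (induction h)
  case 0
  then show ?case by simp
next
  case (Suc h)
  have "(\<Sum>j<2*Suc h+1. g j) = (\<Sum>j<2*h+1. g j) + g (2*h+1) + g (2 + 2*h)"
    by (simp add: add_ac)
  also have "g (2*h+1) = 0" using Suc.prems by simp
  also have "(\<Sum>j<2*h+1. g j) = g 0 + (\<Sum>t<h. g (2 + 2*t))" using Suc by simp
  finally show ?case by simp
qed

context oddsetup begin

lemma key_identity:
  assumes k: "1 \<le> k"
  shows "(kac2_mat n1 n2 t1 t2 ^\<^sub>m k) $$ (0,0)
       = (\<Sum>t<N div 2. (- vv $ (2 + 2*t)) * (kac2_mat n1 n2 t1 t2 ^\<^sub>m k) $$ (0, 2 + 2*t))"
proof -
  let ?g = "\<lambda>j. (kac2_mat n1 n2 t1 t2 ^\<^sub>m k) $$ (0,j) * vv $ j"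
  have NN: "N = 2 * (N div 2) + 1" using odd by presburger
  have "0 = (\<Sum>j<N. ?g j)" unfolding vv_def using v0_props(4)[OF o1 o2 k] by simp
  also have "\<dots> = ?g 0 + (\<Sum>t<N div 2. ?g (2 + 2*t))"
    by (subst NN, rule sum_odd_zero) (use v0_props(3)[OF o1 o2] NN in \<open>auto simp: vv_def\<close>)
  finally show ?thesis using v0_props(2)[OF o1 o2]
    by (simp add: vv_def sum_negf algebra_simps eq_neg_iff_add_eq_0)
qed

lemma N1: "2 \<le> 2*N" using Npos by linarith

lemma NN: "N = 2 * (N div 2) + 1" using odd by simp

lemma len_rows: "length (map f [2..<2 * N] @ [f s]) = 2 * N - 1"
proof -
  have "length (map f [2..<2 * N] @ [f s]) = (2 * N - 2) + 1" by simp
  then show ?thesis using N1 by linarith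
qed

lemma rows_facts:
  assumes s: "s \<ge> 2 * N" and i: "i < 2 * N - 1"
  shows "(map f [2..<2 * N] @ [f s]) ! i = f (if i < 2 * N - 2 then i + 2 else s)"
    "2 \<le> (if i < 2 * N - 2 then i + 2 else s)"
proof -
  show "(map f [2..<2 * N] @ [f s]) ! i = f (if i < 2 * N - 2 then i + 2 else s)"
  proof (cases "i < 2 * N - 2")
    case True
    then show ?thesis by (simp add: nth_append)
  next
    case False
    then have "i = 2 * N - 2" using i by linarith
    then show ?thesis using False by (simp add: nth_append)
  qed
  show "2 \<le> (if i < 2 * N - 2 then i + 2 else s)"
  proof (cases "i < 2 * N - 2")
    case False
    have "2 \<le> s" using s N1 by linarith
    then show ?thesis using False by simp
  qed simp
qed

lemma col_index:
  assumes s: "s \<ge> 2 * N" and i: "i < 2 * N - 1" and c: "c < 2 * N"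
  shows "col (mat_of_rows (2 * N) (map f [2..<2 * N] @ [f s])) c $ i
       = f (if i < 2 * N - 2 then i + 2 else s) $ c"
proof -
  have i': "i < length (map f [2..<2 * N] @ [f s])" using i len_rows by simp
  have "col (mat_of_rows (2 * N) (map f [2..<2 * N] @ [f s])) c $ i
     = mat_of_rows (2 * N) (map f [2..<2 * N] @ [f s]) $$ (i, c)"
    by (rule index_col) (use i' c in simp_all)
  also have "\<dots> = (map f [2..<2 * N] @ [f s]) ! i $ c" by (rule mat_of_rows_index[OF i' c])
  finally show ?thesis unfolding rows_facts(1)[OF s i] .
qed

lemma col_carrier: "col (mat_of_rows (2 * N) (map f [2..<2 * N] @ [f s])) c \<in> carrier_vec (2 * N - 1)"
  unfolding carrier_vec_def using len_rows by simp

lemma partB: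
  assumes s: "s \<ge> 2 * N"
  defines "Mx \<equiv> mat_of_rows (2 * N) (map f [2..<2 * N] @ [f s])"
  shows "col Mx 0 \<in> span_vecs (2 * N - 1) {col Mx (3 + 2 * t - 1) | t. 3 + 2 * t \<le> N}"
proof (rule span_comb[where h = "N div 2" and C = "\<lambda>t. col Mx (2 + 2*t)" and coef = "\<lambda>t. - vv $ (2 + 2*t)"])
  show "{col Mx (3 + 2 * t - 1) | t. 3 + 2 * t \<le> N} \<subseteq> carrier_vec (2 * N - 1)"
    unfolding Mx_def using col_carrier by blast
  show "col Mx 0 \<in> carrier_vec (2 * N - 1)" unfolding Mx_def by (rule col_carrier)
  fix t assume t: "t < N div 2"
  then have t3: "3 + 2 * t \<le> N" using NN by linarith
  show "col Mx (2 + 2 * t) \<in> {col Mx (3 + 2 * t - 1) | t. 3 + 2 * t \<le> N}"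
    by (rule CollectI, rule exI[of _ t]) (simp add: t3)
next
  fix i assume i: "i < 2 * N - 1"
  define k where "k = (if i < 2 * N - 2 then i + 2 else s)"
  have k1: "1 \<le> k" using rows_facts(2)[OF s i] unfolding k_def by linarith
  have lt: "2 + 2 * t < N" if "t < N div 2" for t using that NN by linarith
  have "col Mx 0 $ i = f k $ 0" unfolding Mx_def k_def by (rule col_index[OF s i]) (use N1 in linarith)
  also have "\<dots> = (kac2_mat n1 n2 t1 t2 ^\<^sub>m k) $$ (0,0)" using Npos N1 by (subst e1Q_index) auto
  also have "\<dots> = (\<Sum>t<N div 2. (- vv $ (2 + 2*t)) * (kac2_mat n1 n2 t1 t2 ^\<^sub>m k) $$ (0, 2 + 2*t))"
    by (rule key_identity[OF k1])
  also have "\<dots> = (\<Sum>t<N div 2. (- vv $ (2 + 2*t)) * col Mx (2 + 2*t) $ i)"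
  proof (rule sum.cong[OF refl])
    fix t assume "t \<in> {..<N div 2}"
    then have t: "2 + 2 * t < N" using lt by auto
    have "col Mx (2 + 2*t) $ i = f k $ (2 + 2*t)" unfolding Mx_def k_def by (rule col_index[OF s i]) (use t in linarith)
    also have "\<dots> = (kac2_mat n1 n2 t1 t2 ^\<^sub>m k) $$ (0, 2 + 2*t)" using Npos t by (subst e1Q_index) auto
    finally have "col Mx (2 + 2*t) $ i = (kac2_mat n1 n2 t1 t2 ^\<^sub>m k) $$ (0, 2 + 2*t)" .
    then show "(- vv $ (2 + 2*t)) * (kac2_mat n1 n2 t1 t2 ^\<^sub>m k) $$ (0, 2 + 2*t) = (- vv $ (2 + 2*t)) * col Mx (2 + 2*t) $ i"
      by simp
  qed
  finally show "col Mx 0 $ i = (\<Sum>t<N div 2. (- vv $ (2 + 2*t)) * col Mx (2 + 2*t) $ i)" .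
qed

lemma partC:
  assumes s: "s \<ge> 2 * N"
  defines "Mx \<equiv> mat_of_rows (2 * N) (map f [2..<2 * N] @ [f s])"
  shows "col Mx N \<in> span_vecs (2 * N - 1) {col Mx (N + 3 + 2 * t - 1) | t. N + 3 + 2 * t \<le> 2 * N}"
proof (rule span_comb[where h = "N div 2" and C = "\<lambda>t. col Mx (N + 2 + 2*t)" and coef = "\<lambda>t. - vv $ (2 + 2*t)"])
  show "{col Mx (N + 3 + 2 * t - 1) | t. N + 3 + 2 * t \<le> 2 * N} \<subseteq> carrier_vec (2 * N - 1)"
    unfolding Mx_def using col_carrier by blast
  show "col Mx N \<in> carrier_vec (2 * N - 1)" unfolding Mx_def by (rule col_carrier)
  fix t assume t: "t < N div 2"
  then have t3: "N + 3 + 2 * t \<le> 2 * N" using NN by linarith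
  show "col Mx (N + 2 + 2 * t) \<in> {col Mx (N + 3 + 2 * t - 1) | t. N + 3 + 2 * t \<le> 2 * N}"
    by (rule CollectI, rule exI[of _ t]) (simp add: t3)
next
  fix i assume i: "i < 2 * N - 1"
  define k where "k = (if i < 2 * N - 2 then i + 2 else s)"
  have k2: "2 \<le> k" using rows_facts(2)[OF s i] unfolding k_def .
  have k1: "1 \<le> k - 1" using k2 by simp
  have lt: "2 + 2 * t < N" if "t < N div 2" for t using that NN by linarith
  have "col Mx N $ i = f k $ N" unfolding Mx_def k_def by (rule col_index[OF s i]) (use Npos in linarith)
  also have "\<dots> = of_nat k * (kac2_mat n1 n2 t1 t2 ^\<^sub>m (k - 1)) $$ (0,0)" using Npos by (subst e1Q_index) auto
  also have "\<dots> = of_nat k * (\<Sum>t<N div 2. (- vv $ (2 + 2*t)) * (kac2_mat n1 n2 t1 t2 ^\<^sub>m (k - 1)) $$ (0, 2 + 2*t))"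
    by (subst key_identity[OF k1]) simp
  also have "\<dots> = (\<Sum>t<N div 2. (- vv $ (2 + 2*t)) * col Mx (N + 2 + 2*t) $ i)"
    unfolding sum_distrib_left
  proof (rule sum.cong[OF refl])
    fix t assume "t \<in> {..<N div 2}"
    then have t: "2 + 2 * t < N" using lt by auto
    have t2N: "N + 2 + 2*t < 2 * N" using t by linarith
    have "col Mx (N + 2 + 2*t) $ i = f k $ (N + 2 + 2*t)" unfolding Mx_def k_def by (rule col_index[OF s i t2N])
    also have "\<dots> = of_nat k * (kac2_mat n1 n2 t1 t2 ^\<^sub>m (k - 1)) $$ (0, 2 + 2*t)" using Npos t t2N by (subst e1Q_index) auto
    finally have "col Mx (N + 2 + 2*t) $ i = of_nat k * (kac2_mat n1 n2 t1 t2 ^\<^sub>m (k - 1)) $$ (0, 2 + 2*t)" .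
    then show "of_nat k * ((- vv $ (2 + 2*t)) * (kac2_mat n1 n2 t1 t2 ^\<^sub>m (k - 1)) $$ (0, 2 + 2*t)) = (- vv $ (2 + 2*t)) * col Mx (N + 2 + 2*t) $ i"
      by simp
  qed
  finally show "col Mx N $ i = (\<Sum>t<N div 2. (- vv $ (2 + 2*t)) * col Mx (N + 2 + 2*t) $ i)" .
qed

end

theorem lemma5:
  fixes n1 n2 :: nat and \<tau>1 \<tau>2 :: real
  assumes "n1 \<ge> 2" and "n2 \<ge> 2"
    and "\<tau>1 \<noteq> \<tau>2"
    and "indep_pair n1 n2 (csqrt (complex_of_real \<tau>1)) (csqrt (complex_of_real \<tau>2))"
  shows "(even (n1 * n2) \<longrightarrow>
           (\<forall>s::nat. s \<ge> 1 \<longrightarrow>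
              lin_indep_family (2 * (n1 * n2))
                (map (e1Q n1 n2 \<tau>1 \<tau>2) [s ..< s + 2 * (n1 * n2)])))
       \<and> (odd (n1 * n2) \<longrightarrow>
           (\<forall>s::nat. s \<ge> 2 * (n1 * n2) \<longrightarrow>
              (let N = n1 * n2;
                   \<Lambda> = e1Q n1 n2 \<tau>1 \<tau>2 ` {2 ..< 2 * N};
                   M = mat_of_rows (2 * N) (map (e1Q n1 n2 \<tau>1 \<tau>2) [2 ..< 2 * N] @ [e1Q n1 n2 \<tau>1 \<tau>2 s]);
                   C = (\<lambda>k. col M (k - 1))
               in \<not> lin_dep_vecs (2 * N) \<Lambda>
                  \<and> lin_dep_vecs (2 * N) (\<Lambda> \<union> {e1Q n1 n2 \<tau>1 \<tau>2 s})
                  \<and> C 1 \<in> span_vecs (2 * N - 1) {C (3 + 2 * t) | t. 3 + 2 * t \<le> N}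
                  \<and> C (N + 1) \<in> span_vecs (2 * N - 1) {C (N + 3 + 2 * t) | t. N + 3 + 2 * t \<le> 2 * N})))"
proof -
  have P1: "even (n1 * n2) \<longrightarrow>
           (\<forall>s::nat. s \<ge> 1 \<longrightarrow>
              lin_indep_family (2 * (n1 * n2))
                (map (e1Q n1 n2 \<tau>1 \<tau>2) [s ..< s + 2 * (n1 * n2)]))"
    using even_case[OF assms(1,2,4)] by blast
  have P2: "\<forall>s::nat. s \<ge> 2 * (n1 * n2) \<longrightarrow>
              (let N = n1 * n2;
                   \<Lambda> = e1Q n1 n2 \<tau>1 \<tau>2 ` {2 ..< 2 * N};
                   M = mat_of_rows (2 * N) (map (e1Q n1 n2 \<tau>1 \<tau>2) [2 ..< 2 * N] @ [e1Q n1 n2 \<tau>1 \<tau>2 s]);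
                   C = (\<lambda>k. col M (k - 1))
               in \<not> lin_dep_vecs (2 * N) \<Lambda>
                  \<and> lin_dep_vecs (2 * N) (\<Lambda> \<union> {e1Q n1 n2 \<tau>1 \<tau>2 s})
                  \<and> C 1 \<in> span_vecs (2 * N - 1) {C (3 + 2 * t) | t. 3 + 2 * t \<le> N}
                  \<and> C (N + 1) \<in> span_vecs (2 * N - 1) {C (N + 3 + 2 * t) | t. N + 3 + 2 * t \<le> 2 * N})"
    if od: "odd (n1 * n2)"
  proof (intro allI impI)
    fix s :: nat assume s: "s \<ge> 2 * (n1 * n2)"
    interpret oddsetup n1 n2 \<tau>1 \<tau>2 using assms(1,2,4) od by unfold_locales
    show "let N = n1 * n2;
                   \<Lambda> = e1Q n1 n2 \<tau>1 \<tau>2 ` {2 ..< 2 * N};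
                   M = mat_of_rows (2 * N) (map (e1Q n1 n2 \<tau>1 \<tau>2) [2 ..< 2 * N] @ [e1Q n1 n2 \<tau>1 \<tau>2 s]);
                   C = (\<lambda>k. col M (k - 1))
               in \<not> lin_dep_vecs (2 * N) \<Lambda>
                  \<and> lin_dep_vecs (2 * N) (\<Lambda> \<union> {e1Q n1 n2 \<tau>1 \<tau>2 s})
                  \<and> C 1 \<in> span_vecs (2 * N - 1) {C (3 + 2 * t) | t. 3 + 2 * t \<le> N}
                  \<and> C (N + 1) \<in> span_vecs (2 * N - 1) {C (N + 3 + 2 * t) | t. N + 3 + 2 * t \<le> 2 * N}"
      unfolding Let_def
    proof (intro conjI)
      show "\<not> lin_dep_vecs (2 * (n1 * n2)) (e1Q n1 n2 \<tau>1 \<tau>2 ` {2..<2 * (n1 * n2)})"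
        by (rule Lam_indep(2))
      show "lin_dep_vecs (2 * (n1 * n2)) (e1Q n1 n2 \<tau>1 \<tau>2 ` {2..<2 * (n1 * n2)} \<union> {e1Q n1 n2 \<tau>1 \<tau>2 s})"
        by (rule Lam_s_dep[OF s])
      show "col (mat_of_rows (2 * (n1 * n2)) (map (e1Q n1 n2 \<tau>1 \<tau>2) [2..<2 * (n1 * n2)] @ [e1Q n1 n2 \<tau>1 \<tau>2 s])) (1 - 1)
        \<in> span_vecs (2 * (n1 * n2) - 1)
            {col (mat_of_rows (2 * (n1 * n2)) (map (e1Q n1 n2 \<tau>1 \<tau>2) [2..<2 * (n1 * n2)] @ [e1Q n1 n2 \<tau>1 \<tau>2 s])) (3 + 2 * t - 1) |t.
             3 + 2 * t \<le> n1 * n2}"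
        using partB[OF s] by simp
      show "col (mat_of_rows (2 * (n1 * n2)) (map (e1Q n1 n2 \<tau>1 \<tau>2) [2..<2 * (n1 * n2)] @ [e1Q n1 n2 \<tau>1 \<tau>2 s])) (n1 * n2 + 1 - 1)
        \<in> span_vecs (2 * (n1 * n2) - 1)
            {col (mat_of_rows (2 * (n1 * n2)) (map (e1Q n1 n2 \<tau>1 \<tau>2) [2..<2 * (n1 * n2)] @ [e1Q n1 n2 \<tau>1 \<tau>2 s])) (n1 * n2 + 3 + 2 * t - 1) |t.
             n1 * n2 + 3 + 2 * t \<le> 2 * (n1 * n2)}"
        using partC[OF s] by simp
    qed
  qed
  show ?thesis using P1 P2 by blast
qed

end
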